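(* Consider the semidiscrete electroquasistatic system with circuit coupling, in the unknowns $\Phi(t)\in\mathbb{R}^{n_1}$, $v_C(t)\in\mathbb{R}^k$, $i_C(t)\in\mathbb{R}^k$: \begin{align*} Q_s^\top L_\sigma Q_s\Phi+Q_s^\top L_\varepsilon Q_s\tfrac{d}{dt}\Phi+Q_s^\top L_\sigma Y_s v_C+Q_s^\top L_\varepsilon Y_s\tfrac{d}{dt}v_C&=0,\\ Y_s^\top L_\sigma Q_s\Phi+Y_s^\top L_\varepsilon Q_s\tfrac{d}{dt}\Phi+Y_s^\top L_\sigma Y_s v_C+Y_s^\top L_\varepsilon Y_s\tfrac{d}{dt}v_C&=i_C, \end{align*} with internal variable $x_C=\Phi$. Under the assumptions listed in the context, this system is a strongly capacitance-like element.
   Context: Setting (spatial discretization of the electroquasistatic problem $\nabla\cdot\sigma\nabla\phi+\frac{d}{dt}\nabla\cdot\varepsilon\nabla\phi=0$ with homogeneous Dirichlet/Neumann conditions incorporated and terminal voltages $v_C$ prescribed on the contact boundary): $L_\sigma=\widetilde S M_\sigma\widetilde S^\top$ and $L_\varepsilon=\widetilde S M_\varepsilon\widetilde S^\top$ with $\widetilde S\in\mathbb{R}^{N\times m}$ (discrete dual divergence) such that the discrete gradient $G=-\widetilde S^\top$ has full column rank; $M_\varepsilon\in\mathbb{R}^{m\times m}$ is a symmetric positive definite permittivity matrix and $M_\sigma\in\mathbb{R}^{m\times m}$ a symmetric positive semidefinite conductivity matrix. The $N$ nodal degrees of freedom are split into those on the contact boundary and the rest: $Q_s\in\mathbb{R}^{N\times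 n_1}$ and $P_s\in\mathbb{R}^{N\times n_2}$ ($n_1+n_2=N$) are basis matrices of full column rank such that the columns of $Q_s$ and $P_s$ together are the distinct unit vectors of $\mathbb{R}^N$ (columns of $P_s$ for contact-boundary degrees of freedom). The contact boundary consists of $k$ pairwise disjoint terminals; $\Lambda_s\in\mathbb{R}^{n_2\times k}$ has entry $1$ in position $(i,j)$ if contact degree of freedom $i$ belongs to terminal $j$ and $0$ otherwise, and has full column rank; $Y_s=P_s\Lambda_s$. Definitions: a function $F(u,y)$ is strongly monotone with respect to $u$ if there is $c>0$ with $\langle F(u,y)-F(\bar u,y),u-\bar u\rangle\ge c\|u-\bar u\|^2$ for all $y,u,\bar u$. A capacitance-like element is one described by $f_C(\frac{d}{dt}d_C(x_C,i_C,v_C,t),x_C,i_C,v_C,t)=0$ such that at most one differentiation with respect to $t$ is needed to obtain $x_C'=\varphi_C(i_C',x_C,i_C,v_C,t)$, $v_C'=g_C(x_C,i_C,v_C,t)$; it is strongly capacitance-like if additionally $F_C(i_C',x_C,i_C,v_C,t):=\partial_{x_C}g_C(x_C,i_C,v_C,t)\varphi_C(i_C',x_C,i_C,v_C,t)+\partial_{i_C}g_C(x_C,i_C,v_C,t)i_C'$ is continuous and strongly monotone with respect to $i_C'$. *)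

theory Defs
  imports "HOL-Analysis.Analysis"
begin

section \<open>Generic notions: (strongly) capacitance-like elements\<close>

text \<open>An element is described by f(d/dt d(x,i,v,t), x, i, v, t) = 0,
  with internal variable x, current i and voltage v.  Arguments of f:
  the time derivative of d, then x, i, v, t.\<close>

definition ce_solution ::
  "('d::real_normed_vector \<Rightarrow> 'x::real_normed_vector \<Rightarrow> 'v::real_normed_vector \<Rightarrow> 'v \<Rightarrow> real \<Rightarrow> 'r::zero)
   \<Rightarrow> ('x \<Rightarrow> 'v \<Rightarrow> 'v \<Rightarrow> real \<Rightarrow> 'd) \<Rightarrow> real set
   \<Rightarrow> (real \<Rightarrow> 'x) \<Rightarrow> (real \<Rightarrow> 'v) \<Rightarrow> (real \<Rightarrow> 'v) \<Rightarrow> bool" where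
  "ce_solution f d J x i v \<longleftrightarrow> open J \<and>
     (\<forall>t\<in>J. x differentiable (at t) \<and> i differentiable (at t) \<and> v differentiable (at t) \<and>
        (\<lambda>s. d (x s) (i s) (v s) s) differentiable (at t) \<and>
        f (vector_derivative (\<lambda>s. d (x s) (i s) (v s) s) (at t)) (x t) (i t) (v t) t = 0)"

text \<open>Capacitance-like with witnesses phi, g: using the equations and at most one
  time differentiation, every (once differentiable) solution satisfies
  x' = phi(i', x, i, v, t) and v' = g(x, i, v, t).\<close>

definition capacitance_like_via ::
  "('d::real_normed_vector \<Rightarrow> 'x::real_normed_vector \<Rightarrow> 'v::real_normed_vector \<Rightarrow> 'v \<Rightarrow> real \<Rightarrow> 'r::zero)
   \<Rightarrow> ('x \<Rightarrow> 'v \<Rightarrow> 'v \<Rightarrow> real \<Rightarrow> 'd)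
   \<Rightarrow> ('v \<Rightarrow> 'x \<Rightarrow> 'v \<Rightarrow> 'v \<Rightarrow> real \<Rightarrow> 'x) \<Rightarrow> ('x \<Rightarrow> 'v \<Rightarrow> 'v \<Rightarrow> real \<Rightarrow> 'v) \<Rightarrow> bool" where
  "capacitance_like_via f d \<phi> g \<longleftrightarrow>
     (\<forall>J x i v. ce_solution f d J x i v \<longrightarrow>
        (\<forall>t\<in>J. vector_derivative x (at t) = \<phi> (vector_derivative i (at t)) (x t) (i t) (v t) t \<and>
               vector_derivative v (at t) = g (x t) (i t) (v t) t))"

definition capacitance_like where
  "capacitance_like f d \<longleftrightarrow> (\<exists>\<phi> g. capacitance_like_via f d \<phi> g)"

text \<open>Strong monotonicity of F(u, y) with respect to u (uniform constant c > 0).\<close>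

definition strongly_monotone_wrt_first :: "('u::real_inner \<Rightarrow> 'y \<Rightarrow> 'u) \<Rightarrow> bool" where
  "strongly_monotone_wrt_first F \<longleftrightarrow>
     (\<exists>c>0. \<forall>y u u'. inner (F u y - F u' y) (u - u') \<ge> c * (norm (u - u'))\<^sup>2)"

text \<open>Strongly capacitance-like: g has partial derivatives gx (w.r.t. x) and gi
  (w.r.t. i) everywhere, and
  F(i', x, i, v, t) = gx(x,i,v,t)(phi(i',x,i,v,t)) + gi(x,i,v,t)(i')
  is continuous and strongly monotone w.r.t. i'.\<close>

definition strongly_capacitance_like ::
  "('d::real_normed_vector \<Rightarrow> 'x::real_normed_vector \<Rightarrow> 'v::real_inner \<Rightarrow> 'v \<Rightarrow> real \<Rightarrow> 'r::zero)
   \<Rightarrow> ('x \<Rightarrow> 'v \<Rightarrow> 'v \<Rightarrow> real \<Rightarrow> 'd) \<Rightarrow> bool" where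
  "strongly_capacitance_like f d \<longleftrightarrow>
     (\<exists>\<phi> g gx gi. capacitance_like_via f d \<phi> g \<and>
        (\<forall>x i v t. ((\<lambda>x'. g x' i v t) has_derivative gx x i v t) (at x) \<and>
                   ((\<lambda>i'. g x i' v t) has_derivative gi x i v t) (at i)) \<and>
        continuous_on UNIV
          (\<lambda>(di, x, i, v, t). gx x i v t (\<phi> di x i v t) + gi x i v t di) \<and>
        strongly_monotone_wrt_first
          (\<lambda>di (x, i, v, t). gx x i v t (\<phi> di x i v t) + gi x i v t di))"

section \<open>Matrix notions\<close>

definition sym_mat :: "real^'n^'n \<Rightarrow> bool" where
  "sym_mat M \<longleftrightarrow> transpose M = M"

definition pos_def_mat :: "real^'n^'n \<Rightarrow> bool" where
  "pos_def_mat M \<longleftrightarrow> sym_mat M \<and> (\<forall>x. x \<noteq> 0 \<longrightarrow> x \<bullet> (M *v x) > 0)"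

definition pos_semidef_mat :: "real^'n^'n \<Rightarrow> bool" where
  "pos_semidef_mat M \<longleftrightarrow> sym_mat M \<and> (\<forall>x. x \<bullet> (M *v x) \<ge> 0)"

text \<open>Columns of Q and P together are the distinct unit vectors of R^N.\<close>

definition dof_split :: "real^'n1^'N \<Rightarrow> real^'n2^'N \<Rightarrow> bool" where
  "dof_split Q P \<longleftrightarrow> (\<exists>q p. inj q \<and> inj p \<and> range q \<inter> range p = {} \<and> range q \<union> range p = UNIV \<and>
      Q = (\<chi> r c. if r = q c then 1 else 0) \<and> P = (\<chi> r c. if r = p c then 1 else 0))"

text \<open>Terminal incidence matrix: 0/1 entries, each contact dof in exactly one
  terminal (terminals pairwise disjoint, covering the contact boundary).\<close>

definition terminal_incidence :: "real^'k^'n2 \<Rightarrow> bool" where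
  "terminal_incidence \<Lambda> \<longleftrightarrow> (\<forall>r c. \<Lambda> $ r $ c = 0 \<or> \<Lambda> $ r $ c = 1) \<and>
      (\<forall>r. \<exists>!c. \<Lambda> $ r $ c = 1)"

section \<open>The semidiscrete EQS element\<close>

text \<open>d_C(x,i,v,t) = (Phi, v_C) with x = Phi; f_C((Phi', v'), Phi, i, v, t) is the
  residual of the two equations.\<close>

definition eqs_d :: "real^'n1 \<Rightarrow> real^'k \<Rightarrow> real^'k \<Rightarrow> real \<Rightarrow> (real^'n1) \<times> (real^'k)" where
  "eqs_d \<Phi> i v t = (\<Phi>, v)"

definition eqs_f ::
  "real^'N^'N \<Rightarrow> real^'N^'N \<Rightarrow> real^'n1^'N \<Rightarrow> real^'k^'N
   \<Rightarrow> (real^'n1) \<times> (real^'k) \<Rightarrow> real^'n1 \<Rightarrow> real^'k \<Rightarrow> real^'k \<Rightarrow> real \<Rightarrow> (real^'n1) \<times> (real^'k)" where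
  "eqs_f L\<sigma> L\<epsilon> Q Y dd \<Phi> i v t =
     (let d\<Phi> = fst dd; dv = snd dd in
      ((transpose Q ** L\<sigma> ** Q) *v \<Phi> + (transpose Q ** L\<epsilon> ** Q) *v d\<Phi>
        + (transpose Q ** L\<sigma> ** Y) *v v + (transpose Q ** L\<epsilon> ** Y) *v dv,
       (transpose Y ** L\<sigma> ** Q) *v \<Phi> + (transpose Y ** L\<epsilon> ** Q) *v d\<Phi>
        + (transpose Y ** L\<sigma> ** Y) *v v + (transpose Y ** L\<epsilon> ** Y) *v dv - i))"

end

theory Submission
  imports Defs
begin

lemma coercive:
  fixes T :: "'a::euclidean_space \<Rightarrow> 'a"
  assumes lin: "linear T" and pos: "\<forall>u. u \<noteq> 0 \<longrightarrow> inner (T u) u > 0"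
  shows "\<exists>c>0. \<forall>u. inner (T u) u \<ge> c * (norm u)\<^sup>2"
proof -
  have bl: "bounded_linear T" using lin linear_conv_bounded_linear by blast
  have cont: "continuous_on (sphere 0 1) (\<lambda>u. inner (T u) u)"
    by (intro continuous_intros linear_continuous_on bl)
  obtain b :: 'a where b: "b \<in> Basis" using nonempty_Basis by blast
  have ne: "sphere (0::'a) 1 \<noteq> {}" using b by (auto intro!: exI[of _ b])
  obtain e where e: "e \<in> sphere 0 1" and emin: "\<forall>y\<in>sphere 0 1. inner (T e) e \<le> inner (T y) y"
    using continuous_attains_inf[OF compact_sphere ne cont] by blast
  have cpos: "inner (T e) e > 0" using e pos by (metis mem_sphere_0 norm_zero zero_neq_one)
  show ?thesis
  proof (intro exI[of _ "inner (T e) e"] conjI allI cpos)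
    fix u :: 'a
    show "inner (T e) e * (norm u)\<^sup>2 \<le> inner (T u) u"
    proof (cases "u = 0")
      case True then show ?thesis using linear_0[OF lin] by simp
    next
      case False
      define w where "w = u /\<^sub>R norm u"
      have w1: "w \<in> sphere 0 1" using False by (simp add: w_def)
      have uw: "u = norm u *\<^sub>R w" using False by (simp add: w_def)
      have "inner (T u) u = (norm u)\<^sup>2 * inner (T w) w"
        by (subst (1 2) uw) (simp add: linear_scale[OF lin] power2_eq_square)
      moreover have "inner (T e) e \<le> inner (T w) w" using emin w1 by blast
      ultimately show ?thesis using mult_right_mono[OF _ zero_le_power2] by (simp add: mult.commute)
    qed
  qed
qed

lemma dof_inj:
  fixes Q :: "real^'n1^'N" and P :: "real^'n2^'N"
  assumes "dof_split Q P" and "Q *v a + P *v c = 0"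
  shows "a = 0 \<and> c = 0"
proof -
  obtain q p where q: "inj q" and p: "inj p" and disj: "range q \<inter> range p = {}"
    and Qd: "Q = (\<chi> r c. if r = q c then 1 else 0)" and Pd: "P = (\<chi> r c. if r = p c then 1 else 0)"
    using assms(1) unfolding dof_split_def by blast
  have Qv: "(Q *v a) $ q j = a $ j" for j
    using q by (simp add: Qd matrix_vector_mult_def inj_eq mult_if_delta)
  have Qv0: "(Q *v a) $ p j = 0" for j
    using disj by (auto simp add: Qd matrix_vector_mult_def intro!: sum.neutral) (metis IntI emptyE rangeI)
  have Pv: "(P *v c) $ p j = c $ j" for j
    using p by (simp add: Pd matrix_vector_mult_def inj_eq mult_if_delta)
  have Pv0: "(P *v c) $ q j = 0" for j
    using disj by (auto simp add: Pd matrix_vector_mult_def intro!: sum.neutral) (metis IntI emptyE rangeI)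
  have "(Q *v a + P *v c) $ r = 0" for r using assms(2) by simp
  then show ?thesis
    by (metis Qv Qv0 Pv Pv0 vec_eq_iff zero_index vector_add_component add.right_neutral add_0)
qed

lemma inner_tr: "inner (a::real^'n) (transpose M *v z) = inner (M *v a) z"
  by (metis dot_lmul_matrix inner_commute transpose_matrix_vector)

theorem proposition8:
  fixes S :: "real^'m^'N" and M\<sigma> M\<epsilon> :: "real^'m^'m"
    and Q :: "real^'n1^'N" and P :: "real^'n2^'N" and \<Lambda> :: "real^'k^'n2"
  assumes "rank (- transpose S) = CARD('N)"
    and "pos_def_mat M\<epsilon>"
    and "pos_semidef_mat M\<sigma>"
    and "dof_split Q P"
    and "terminal_incidence \<Lambda>"
    and "rank \<Lambda> = CARD('k)"
  shows "strongly_capacitance_like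
           (eqs_f (S ** M\<sigma> ** transpose S) (S ** M\<epsilon> ** transpose S) Q (P ** \<Lambda>))
           (eqs_d :: real^'n1 \<Rightarrow> real^'k \<Rightarrow> real^'k \<Rightarrow> real \<Rightarrow> (real^'n1) \<times> (real^'k))"
proof -
  define Ls where "Ls = S ** M\<sigma> ** transpose S"
  define Le where "Le = S ** M\<epsilon> ** transpose S"
  define Y where "Y = P ** \<Lambda>"
  define A :: "(real^'n1) \<times> (real^'k) \<Rightarrow> (real^'n1) \<times> (real^'k)" where
    "A = (\<lambda>p. (transpose Q *v (Le *v (Q *v fst p + Y *v snd p)),
                transpose Y *v (Le *v (Q *v fst p + Y *v snd p))))"
  have linA: "linear A"
    by (rule linearI) (auto simp: A_def algebra_simps simp del: transpose_matrix_vector)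
  have injS: "inj ((*v) (- transpose S))"
    using assms(1) full_rank_injective by blast
  have injL: "inj ((*v) \<Lambda>)"
    using assms(6) full_rank_injective by blast
  have Lew: "inner w (Le *v w) = inner (transpose S *v w) (M\<epsilon> *v (transpose S *v w))" for w
    by (simp add: Le_def matrix_vector_mul_assoc[symmetric] inner_tr) (metis dot_lmul_matrix)
  have posA: "inner p (A p) > 0" if "p \<noteq> 0" for p
  proof -
    define w where "w = Q *v fst p + Y *v snd p"
    have "inner p (A p) = inner w (Le *v w)"
      by (cases p) (simp add: A_def w_def inner_tr inner_add_left del: transpose_matrix_vector)
    moreover have "w \<noteq> 0"
    proof
      assume "w = 0"
      then have "Q *v fst p + P *v (\<Lambda> *v snd p) = 0"
        by (simp add: w_def Y_def matrix_vector_mul_assoc)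
      then have "fst p = 0 \<and> \<Lambda> *v snd p = 0" using dof_inj[OF assms(4)] by blast
      moreover have "snd p = 0" if "\<Lambda> *v snd p = 0"
        using injL that by (metis injD matrix_vector_mult_0_right)
      ultimately show False using \<open>p \<noteq> 0\<close> by (simp add: prod_eq_iff)
    qed
    moreover have "transpose S *v w \<noteq> 0"
    proof
      assume h: "transpose S *v w = 0"
      have "(- transpose S) *v w = (- transpose S) *v 0"
        using h by (simp add: matrix_vector_mult_def vec_eq_iff sum_negf)
      then show False using injS \<open>w \<noteq> 0\<close> by (metis injD)
    qed
    ultimately show ?thesis using assms(2) Lew unfolding pos_def_mat_def by simp
  qed
  have injA: "inj A"
    using linA posA by (metis inner_zero_right less_irrefl linear_injective_0)
  obtain Ai where linAi: "linear Ai" and AiA: "\<And>x. Ai (A x) = x" and AAi: "\<And>x. A (Ai x) = x"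
    using linear_injective_isomorphism[OF linA injA] by auto
  define R :: "real^'n1 \<Rightarrow> real^'k \<Rightarrow> real^'k \<Rightarrow> (real^'n1) \<times> (real^'k)" where
    "R = (\<lambda>x i v. (-(transpose Q *v (Ls *v (Q *v x + Y *v v))),
                   i - transpose Y *v (Ls *v (Q *v x + Y *v v))))"
  define Rx :: "real^'n1 \<Rightarrow> (real^'n1) \<times> (real^'k)" where
    "Rx = (\<lambda>h. (-(transpose Q *v (Ls *v (Q *v h))), -(transpose Y *v (Ls *v (Q *v h)))))"
  define T :: "real^'k \<Rightarrow> real^'k" where "T = (\<lambda>h. snd (Ai (0, h)))"
  define Gx :: "real^'n1 \<Rightarrow> real^'k" where "Gx = (\<lambda>h. snd (Ai (Rx h)))"
  have linRx: "linear Rx"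
    by (rule linearI) (auto simp: Rx_def algebra_simps simp del: transpose_matrix_vector)
  have linT: "linear T"
  proof (rule linearI)
    fix b1 b2 :: "real^'k" and r :: real
    have "(0::real^'n1, b1 + b2) = (0, b1) + (0, b2)" by simp
    then show "T (b1 + b2) = T b1 + T b2" unfolding T_def by (metis linear_add[OF linAi] snd_add)
    have "(0::real^'n1, r *\<^sub>R b1) = r *\<^sub>R (0, b1)" by simp
    then show "T (r *\<^sub>R b1) = r *\<^sub>R T b1" unfolding T_def by (metis linear_scale[OF linAi] snd_scaleR)
  qed
  have linGx: "linear Gx"
    by (rule linearI) (simp_all add: Gx_def linear_add[OF linRx] linear_scale[OF linRx]
        linear_add[OF linAi] linear_scale[OF linAi])
  have Rs1: "R x i v = Rx x + R 0 i v" for x i v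
    by (simp add: R_def Rx_def algebra_simps del: transpose_matrix_vector)
  have Rs2: "R x i v = (0, i) + R x 0 v" for x i v
    by (simp add: R_def algebra_simps del: transpose_matrix_vector)
  have solve: "A (a, b) = R x i v" if "eqs_f Ls Le Q Y (a, b) x i v t = 0" for a b x i v t
    using that
    by (simp add: eqs_f_def A_def R_def prod_eq_iff matrix_vector_mul_assoc[symmetric]
        algebra_simps eq_neg_iff_add_eq_0 del: transpose_matrix_vector)
  have posT: "inner (T u) u > 0" if "u \<noteq> 0" for u
  proof -
    define p where "p = Ai (0, u)"
    have Ap: "A p = (0, u)" by (simp add: p_def AAi)
    have "p \<noteq> 0"
    proof
      assume "p = 0"
      then have "A p = 0" using linear_0[OF linA] by simp
      then show False using Ap that by (simp add: zero_prod_def)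
    qed
    then have "inner p (A p) > 0" by (rule posA)
    then show ?thesis by (simp add: Ap T_def p_def[symmetric] inner_Pair_0)
  qed
  obtain c where c: "c > 0" "\<forall>u. inner (T u) u \<ge> c * (norm u)\<^sup>2"
    using coercive[OF linT] posT by blast
  have blT: "bounded_linear T" and blGx: "bounded_linear Gx" and blAi: "bounded_linear Ai"
    using linT linGx linAi linear_conv_bounded_linear by blast+
  have blR: "bounded_linear (\<lambda>(x, i, v, t::real). R x i v)"
    unfolding linear_conv_bounded_linear[symmetric]
    by (rule linearI) (auto simp: R_def algebra_simps simp del: transpose_matrix_vector)
  show ?thesis
    unfolding Ls_def[symmetric] Le_def[symmetric] Y_def[symmetric] strongly_capacitance_like_def
  proof (intro exI[of _ "\<lambda>di x i v t. fst (Ai (R x i v))"] exI[of _ "\<lambda>x i v t. snd (Ai (R x i v))"]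
      exI[of _ "\<lambda>x i v t. Gx"] exI[of _ "\<lambda>x i v t. T"] conjI allI)
    show "capacitance_like_via (eqs_f Ls Le Q Y) eqs_d (\<lambda>di x i v t. fst (Ai (R x i v)))
        (\<lambda>x i v t. snd (Ai (R x i v)))"
      unfolding capacitance_like_via_def
    proof (intro allI impI ballI)
      fix J x i v t
      assume sol: "ce_solution (eqs_f Ls Le Q Y) eqs_d J x i v" and t: "t \<in> J"
      have dx: "x differentiable (at t)" and dv: "v differentiable (at t)"
        and eq: "eqs_f Ls Le Q Y (vector_derivative (\<lambda>s. eqs_d (x s) (i s) (v s) s) (at t))
                   (x t) (i t) (v t) t = 0"
        using sol t unfolding ce_solution_def by auto
      have vd: "vector_derivative (\<lambda>s. eqs_d (x s) (i s) (v s) s) (at t)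
               = (vector_derivative x (at t), vector_derivative v (at t))"
        unfolding eqs_d_def
        by (rule vector_derivative_at, rule has_vector_derivative_Pair)
           (use dx dv vector_derivative_works in blast)+
      have "A (vector_derivative x (at t), vector_derivative v (at t)) = R (x t) (i t) (v t)"
        using eq vd solve by simp
      then have "(vector_derivative x (at t), vector_derivative v (at t)) = Ai (R (x t) (i t) (v t))"
        by (metis AiA)
      then show "vector_derivative x (at t) = fst (Ai (R (x t) (i t) (v t)))
           \<and> vector_derivative v (at t) = snd (Ai (R (x t) (i t) (v t)))"
        by (metis fst_conv snd_conv)
    qed
  next
    fix x :: "real^'n1" and i v :: "real^'k" and t :: real
    have "(\<lambda>x'. snd (Ai (R x' i v))) = (\<lambda>x'. Gx x' + snd (Ai (R 0 i v)))"
      by (rule ext) (metis Gx_def Rs1 linear_add[OF linAi] snd_add)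
    then show "((\<lambda>x'. snd (Ai (R x' i v))) has_derivative Gx) (at x)"
      by (simp add: has_derivative_add_const bounded_linear_imp_has_derivative[OF blGx])
    have "(\<lambda>i'. snd (Ai (R x i' v))) = (\<lambda>i'. T i' + snd (Ai (R x 0 v)))"
      by (rule ext) (metis T_def Rs2 linear_add[OF linAi] snd_add)
    then show "((\<lambda>i'. snd (Ai (R x i' v))) has_derivative T) (at i)"
      by (simp add: has_derivative_add_const bounded_linear_imp_has_derivative[OF blT])
  next
    have c1: "continuous_on UNIV (\<lambda>p::(real^'n1) \<times> (real^'k) \<times> (real^'k) \<times> real. (case p of (x, i, v, t) \<Rightarrow> R x i v))"
      by (rule linear_continuous_on[OF blR])
    show "continuous_on UNIV (\<lambda>(di, x, i, v, t::real). Gx (fst (Ai (R x i v))) + T di)"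
    proof -
      have h1: "continuous_on UNIV (\<lambda>p::(real^'k) \<times> (real^'n1) \<times> (real^'k) \<times> (real^'k) \<times> real.
          Gx (fst (Ai (R (fst (snd p)) (fst (snd (snd p))) (fst (snd (snd (snd p))))))))"
        apply (rule linear_continuous_on_compose[where g=Gx, OF _ linGx])
        apply (rule continuous_on_fst)
        apply (rule linear_continuous_on_compose[where g=Ai, OF _ linAi])
        apply (rule continuous_on_compose2[OF c1[unfolded case_prod_unfold]])
          apply (intro continuous_intros)
        apply simp
        done
      have h2: "continuous_on UNIV (\<lambda>p::(real^'k) \<times> (real^'n1) \<times> (real^'k) \<times> (real^'k) \<times> real. T (fst p))"
        by (rule linear_continuous_on_compose[where g=T, OF continuous_on_fst[OF continuous_on_id] linT])
      show ?thesis using continuous_on_add[OF h1 h2] by (simp add: case_prod_unfold)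
    qed
  next
    show "strongly_monotone_wrt_first (\<lambda>di (x, i, v, t::real). Gx (fst (Ai (R x i v))) + T di)"
      unfolding strongly_monotone_wrt_first_def
    proof (intro exI[of _ c] conjI allI c(1))
      fix y :: "(real^'n1) \<times> (real^'k) \<times> (real^'k) \<times> real" and u u' :: "real^'k"
      have "(case y of (x, i, v, t) \<Rightarrow> Gx (fst (Ai (R x i v))) + T u) -
            (case y of (x, i, v, t) \<Rightarrow> Gx (fst (Ai (R x i v))) + T u') = T (u - u')"
        by (simp add: case_prod_unfold linear_diff[OF linT])
      then show "c * (norm (u - u'))\<^sup>2 \<le> inner ((case y of (x, i, v, t) \<Rightarrow> Gx (fst (Ai (R x i v))) + T u) -
            (case y of (x, i, v, t) \<Rightarrow> Gx (fst (Ai (R x i v))) + T u')) (u - u')"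
        using c(2) by simp
    qed
  qed
qed

end
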